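(* Let $K\ge L\ge T\ge 2$ be integers, let $\kappa,\lambda$ be the smallest non-negative integers such that $K+1+\kappa$ and $L+1+\lambda$ are coprime to $T-1$, and put $K^\star=K+1+\kappa$, $L^\star=L+1+\lambda$, $\bar T=T-1$, $q=K^\star L^\star+\bar T^2$. Let $x$ be a positive integer coprime to $q$ and $y\in\{0,\dots,q-1\}$ the unique integer with $x\bar T+yK^\star\equiv 0\pmod q$. Then the only integer solutions $(i,j)$ of $ix\equiv jy\pmod q$ with $-L\le i\le T+L-1$ and $-K-T+1\le j\le K-1$ are (possibly) $(0,0)$, $(L^\star,\bar T)$ and $(\bar T,-K^\star)$. *)

theory Defs
  imports "HOL-Number_Theory.Number_Theory"
begin

definition shift_min :: "nat \<Rightarrow> nat \<Rightarrow> nat" where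
  "shift_min K T = (LEAST k::nat. coprime (K + 1 + k) (T - 1))"

end

theory Submission
  imports Defs
begin

lemma coprime_aux: "coprime ((c::nat) * m + 1) m"
proof -
  have "gcd m (c * m + 1) = gcd m 1" by (rule gcd_add_mult)
  hence "coprime m (c * m + 1)" by (simp only: coprime_iff_gcd_eq_1 gcd_1_nat)
  thus ?thesis by (rule coprime_commute[THEN iffD1])
qed

lemma shift_min_coprime:
  assumes "T \<ge> 2"
  shows "coprime (K + 1 + shift_min K T) (T - 1)"
proof -
  obtain m where m: "T - 1 = Suc m" using assms by (metis Suc_diff_Suc Suc_1 le_eq_less_or_eq less_Suc_eq_le not_less_eq_eq numeral_2_eq_2 Suc_le_lessD)
  have e: "K + 1 + ((K+1)*m + 1) = (K+1) * Suc m + 1" by simp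
  have "coprime (K + 1 + ((K+1)*m + 1)) (T - 1)"
    unfolding e m by (rule coprime_aux)
  then show ?thesis unfolding shift_min_def by (rule LeastI)
qed


lemma box_cases:
  fixes a b Ks Ls Tb i j :: int and K L :: int
  assumes "Ks \<ge> K + 1" "Ls \<ge> L + 1" "Tb \<ge> 1" "Tb \<le> L - 1" "L \<le> K"
    and i: "i = a * Ls + b * Tb" and j: "j = a * Tb - b * Ks"
    and "- L \<le> i" and "i \<le> Tb + L"
    and "- K - Tb \<le> j" and "j \<le> K - 1"
  shows "(a = 0 \<and> b = 0) \<or> (a = 1 \<and> b = 0) \<or> (a = 0 \<and> b = 1)"
proof -
  have Kpos: "Ks > 0" "Ls > 0" using assms by auto
  consider "b \<ge> 1" | "b \<le> -1" | "b = 0" by linarith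
  then show ?thesis
  proof cases
    case 1
    have "a * Ls \<le> Ls - 1 + Tb - b * Tb" using assms by linarith
    hence "a * Ls \<le> Ls - 1 + (1 - b) * Tb" by (simp add: algebra_simps)
    moreover have "(1 - b) * Tb \<le> 0" using 1 assms by (simp add: mult_nonpos_nonneg)
    ultimately have "a * Ls < 1 * Ls" by linarith
    hence a0: "a \<le> 0" using Kpos mult_less_cancel_right[of a Ls 1] by simp
    hence "a * Tb \<le> 0" using assms by (simp add: mult_nonpos_nonneg)
    moreover have "a * Tb - b * Ks \<ge> - Ks - Tb + 1" using assms by linarith
    ultimately have "b * Ks - Ks \<le> Tb - 1" by linarith
    hence "b * Ks - Ks < 1 * Ks" using assms by linarith
    hence "(b - 1) * Ks < 1 * Ks" by (simp add: algebra_simps)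
    hence "b - 1 < 1" using Kpos mult_less_cancel_right[of "b - 1" Ks 1] by simp
    hence b1: "b = 1" using 1 by linarith
    hence "j = a * Tb - Ks" using j by simp
    hence "(-1) * Tb < a * Tb" using assms by linarith
    hence "-1 < a" using assms mult_less_cancel_right[of "-1" Tb a] by simp
    thus ?thesis using a0 b1 by auto
  next
    case 2
    have "a * Tb \<le> b * Ks + Ks - 2" using assms by linarith
    hence "a * Tb \<le> (b + 1) * Ks - 2" by (simp add: algebra_simps)
    moreover have "(b + 1) * Ks \<le> 0" using 2 Kpos by (simp add: mult_nonpos_nonneg)
    ultimately have "a * Tb < 0 * Tb" by linarith
    hence "a < 0" using assms mult_less_cancel_right[of a Tb 0] by simp
    hence "a \<le> -1" by simp
    hence "a * Ls \<le> (-1) * Ls" using Kpos mult_right_mono[of a "-1" Ls] by linarith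
    moreover have "(-b) * Tb \<ge> 1 * Tb" using 2 assms mult_right_mono[of 1 "-b" Tb] by simp
    ultimately show ?thesis using assms by simp
  next
    case 3
    hence "a * Ls \<ge> - L" "a * Ls \<le> Tb + L" using assms by auto
    hence "(-1) * Ls < a * Ls" "a * Ls < 2 * Ls" using assms by linarith+
    hence "-1 < a" "a < 2" using Kpos mult_less_cancel_right[of "-1" Ls a] mult_less_cancel_right[of a Ls 2] by simp_all
    thus ?thesis using 3 by auto
  qed
qed

theorem lemma6:
  fixes K L T :: nat and x y i j :: int
  assumes "T \<ge> 2" and "L \<ge> T" and "K \<ge> L"
  defines "Ks \<equiv> int (K + 1 + shift_min K T)"
      and "Ls \<equiv> int (L + 1 + shift_min L T)"
      and "Tb \<equiv> int T - 1"
  defines "q \<equiv> Ks * Ls + Tb ^ 2"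
  assumes "x > 0" and "coprime x q"
      and "0 \<le> y" and "y < q" and "[x * Tb + y * Ks = 0] (mod q)"
      and "[i * x = j * y] (mod q)"
      and "- int L \<le> i" and "i \<le> int T + int L - 1"
      and "- int K - int T + 1 \<le> j" and "j \<le> int K - 1"
  shows "(i, j) \<in> {(0, 0), (Ls, Tb), (Tb, - Ks)}"
proof -
  have cop: "coprime Ks Tb"
  proof -
    have "coprime (int (K + 1 + shift_min K T)) (int (T - 1))"
      using shift_min_coprime[OF assms(1)] by (simp only: coprime_int_iff)
    moreover have "int (T - 1) = Tb" using assms(1) Tb_def by simp
    ultimately show ?thesis using Ks_def by simp
  qed
  have d1: "q dvd (x * Tb + y * Ks)" using assms(12) by (simp add: cong_0_iff)
  have d2: "q dvd (i * x - j * y)" using assms(13) by (simp add: cong_iff_dvd_diff)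
  have eq: "x * (i * Ks + j * Tb) = Ks * (i * x - j * y) + j * (x * Tb + y * Ks)"
    by (simp add: algebra_simps)
  have "q dvd x * (i * Ks + j * Tb)" unfolding eq using d1 d2 by simp
  hence "q dvd (i * Ks + j * Tb)" using assms(9)
    using coprime_commute coprime_dvd_mult_right_iff by blast
  then obtain a where a: "i * Ks + j * Tb = q * a" by blast
  have "Ks * (i - a * Ls) = Tb * (a * Tb - j)" using a unfolding q_def by (simp add: algebra_simps power2_eq_square)
  hence "Tb dvd Ks * (i - a * Ls)" by simp
  hence "Tb dvd (i - a * Ls)" using cop using coprime_commute coprime_dvd_mult_right_iff by blast
  then obtain b where b: "i - a * Ls = Tb * b" by blast
  have Tbpos: "Tb \<ge> 1" using assms(1) Tb_def by simp
  have "Ks * (Tb * b) = Tb * (a * Tb - j)" using b \<open>Ks * (i - a * Ls) = _\<close> by simp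
  hence "Tb * (Ks * b) = Tb * (a * Tb - j)" by (simp add: algebra_simps)
  hence "Ks * b = a * Tb - j" using Tbpos by simp
  hence jj: "j = a * Tb - b * Ks" by (simp add: algebra_simps)
  have ii: "i = a * Ls + b * Tb" using b by (simp add: algebra_simps)
  have "(a = 0 \<and> b = 0) \<or> (a = 1 \<and> b = 0) \<or> (a = 0 \<and> b = 1)"
  proof (rule box_cases[where K = "int K" and L = "int L", OF _ _ Tbpos _ _ ii jj])
    show "int K + 1 \<le> Ks" unfolding Ks_def by simp
    show "int L + 1 \<le> Ls" unfolding Ls_def by simp
    show "Tb \<le> int L - 1" unfolding Tb_def using assms(2) by linarith
    show "int L \<le> int K" using assms(3) by simp
    show "- int L \<le> i" by (rule assms(14))
    show "i \<le> Tb + int L" unfolding Tb_def using assms(15) by linarith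
    show "- int K - Tb \<le> j" unfolding Tb_def using assms(16) by linarith
    show "j \<le> int K - 1" by (rule assms(17))
  qed
  thus ?thesis using ii jj by auto
qed

end
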